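(* Let $k\ge 3$, let $s_1,\dots,s_{k-1}$ be reals, and let $n=k$. If $x=(x_1,\dots,x_k)\in S_k$ is a local maximum of $x\mapsto\sum_{i=1}^k x_i^k$ on $S_k$, then there exists an integer $i$ with $1\le 2i<2i+1\le k$ and $x_{2i}=x_{2i+1}$. If $x\in S_k$ is a local minimum of this function on $S_k$, then there exists an integer $i$ with $1\le 2i-1<2i\le k$ and $x_{2i-1}=x_{2i}$.
   Context: For integers $k\ge 3$, $n\ge k$ and reals $s_1,\dots,s_{k-1}$, $S_k:=\{(x_1,\dots,x_n)\in\mathbb{R}^n : x_1\ge x_2\ge\cdots\ge x_n,\ \sum_{i=1}^n x_i^j=s_j\text{ for }j=1,\dots,k-1\}$ with the subspace topology from $\mathbb{R}^n$. *)

theory Defs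
  imports "HOL-Analysis.Analysis"
begin

text \<open>Points of R^n are represented as functions x :: nat => real, of which only the
  coordinates x 1, ..., x n matter (1-based indexing as in the paper).\<close>

definition Sk :: "nat \<Rightarrow> nat \<Rightarrow> (nat \<Rightarrow> real) \<Rightarrow> (nat \<Rightarrow> real) set" where
  "Sk k n s = {x. (\<forall>i\<in>{1..<n}. x (Suc i) \<le> x i) \<and>
                  (\<forall>j\<in>{1..k-1}. (\<Sum>i=1..n. x i ^ j) = s j)}"

definition distn :: "nat \<Rightarrow> (nat \<Rightarrow> real) \<Rightarrow> (nat \<Rightarrow> real) \<Rightarrow> real" where
  "distn n x y = sqrt (\<Sum>i=1..n. (x i - y i)^2)"

definition local_max_on :: "nat \<Rightarrow> (nat \<Rightarrow> real) set \<Rightarrow> ((nat \<Rightarrow> real) \<Rightarrow> real) \<Rightarrow> (nat \<Rightarrow> real) \<Rightarrow> bool" where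
  "local_max_on n S f x \<longleftrightarrow> x \<in> S \<and> (\<exists>e>0. \<forall>y\<in>S. distn n y x < e \<longrightarrow> f y \<le> f x)"

definition local_min_on :: "nat \<Rightarrow> (nat \<Rightarrow> real) set \<Rightarrow> ((nat \<Rightarrow> real) \<Rightarrow> real) \<Rightarrow> (nat \<Rightarrow> real) \<Rightarrow> bool" where
  "local_min_on n S f x \<longleftrightarrow> x \<in> S \<and> (\<exists>e>0. \<forall>y\<in>S. distn n y x < e \<longrightarrow> f x \<le> f y)"

end

theory Submission
  imports Defs "HOL-Computational_Algebra.Polynomial"
begin


definition Qp :: "nat set \<Rightarrow> (nat \<Rightarrow> real) \<Rightarrow> real poly" where
  "Qp I z = (\<Prod>i\<in>I. [:-z i, 1:])"

definition Tp :: "real \<Rightarrow> nat \<Rightarrow> real poly" where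
  "Tp a j = (\<Sum>m<j. monom (a ^ (j - Suc m)) m)"

definition Bp :: "nat set \<Rightarrow> (nat \<Rightarrow> real) \<Rightarrow> nat \<Rightarrow> real poly" where
  "Bp I z j = (\<Sum>i\<in>I. Tp (z i) j)"

definition Ap :: "nat set \<Rightarrow> (nat \<Rightarrow> real) \<Rightarrow> nat \<Rightarrow> real poly" where
  "Ap I z j = (\<Sum>i\<in>I. smult (z i ^ j) (\<Prod>l\<in>I-{i}. [:-z l, 1:]))"

lemma geom_poly: "monom 1 j = [:-a, 1:] * Tp a j + [:a ^ j:]"
proof -
  have "poly (monom 1 j) t = poly ([:-a, 1:] * Tp a j + [:a ^ j:]) t" for t
    using power_diff_sumr2[of t j a]
    by (simp add: Tp_def poly_sum poly_monom algebra_simps)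
  thus ?thesis using poly_eq_poly_eq_iff by blast
qed

lemma aux_ring: "(L * T + [:a:]) * R = (L * R) * T + smult a (R::real poly)"
  by (simp add: algebra_simps)

lemma key_div:
  assumes "finite I"
  shows "monom 1 j * pderiv (Qp I z) = Qp I z * Bp I z j + Ap I z j"
proof -
  have d: "pderiv (Qp I z) = (\<Sum>i\<in>I. \<Prod>l\<in>I-{i}. [:-z l, 1:])"
    unfolding Qp_def pderiv_prod by (simp add: pderiv_pCons)
  have e: "monom 1 j * (\<Prod>l\<in>I-{i}. [:-z l, 1:]) = Qp I z * Tp (z i) j + smult (z i ^ j) (\<Prod>l\<in>I-{i}. [:-z l, 1:])"
    if "i \<in> I" for i
  proof -
    have "Qp I z = [:-z i, 1:] * (\<Prod>l\<in>I-{i}. [:-z l, 1:])"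
      unfolding Qp_def using assms that by (simp add: prod.remove)
    have "monom 1 j * (\<Prod>l\<in>I-{i}. [:-z l, 1:]) = ([:-z i, 1:] * Tp (z i) j + [:z i ^ j:]) * (\<Prod>l\<in>I-{i}. [:-z l, 1:])"
      using geom_poly by metis
    also have "\<dots> = ([:-z i, 1:] * (\<Prod>l\<in>I-{i}. [:-z l, 1:])) * Tp (z i) j + smult (z i ^ j) (\<Prod>l\<in>I-{i}. [:-z l, 1:])"
      by (rule aux_ring)
    finally show ?thesis using \<open>Qp I z = _\<close> by simp
  qed
  show ?thesis unfolding d sum_distrib_left Bp_def Ap_def
    using e by (simp add: sum.distrib sum_distrib_left)
qed

lemma deg_Tp: "degree (Tp a j) \<le> j - 1"
  unfolding Tp_def
proof (rule degree_sum_le)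
  fix m assume "m \<in> {..<j}"
  thus "degree (monom (a ^ (j - Suc m)) m) \<le> j - 1"
    using degree_monom_le[of "a ^ (j - Suc m)" m] by simp
qed simp

lemma deg_Bp: "finite I \<Longrightarrow> degree (Bp I z j) \<le> j - 1"
  unfolding Bp_def by (intro degree_sum_le) (use deg_Tp in auto)

lemma deg_Ap: "finite I \<Longrightarrow> degree (Ap I z j) \<le> card I - 1"
proof -
  assume f: "finite I"
  have "degree (smult (z i ^ j) (\<Prod>l\<in>I-{i}. [:-z l, 1:])) \<le> card I - 1" if "i \<in> I" for i
  proof -
    have "degree (\<Prod>l\<in>I-{i}. [:-z l, 1:]) \<le> (\<Sum>l\<in>I-{i}. degree [:-z l, 1:])"
      using f degree_prod_sum_le[of "I-{i}" "\<lambda>l. [:-z l, 1:]"] by (simp add: o_def)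
    also have "\<dots> = card I - 1" using f that by simp
    finally show ?thesis using degree_smult_le order_trans by blast
  qed
  thus ?thesis unfolding Ap_def using f by (intro degree_sum_le) auto
qed

lemma deg_Qp: "finite I \<Longrightarrow> degree (Qp I z) = card I"
  unfolding Qp_def by (subst degree_prod_eq_sum_degree) auto

lemma lc_Qp: "coeff (Qp I z) (card I) = 1"
proof (cases "finite I")
  case True
  then show ?thesis using lead_coeff_prod[of "\<lambda>i. [:-z i, 1:]" I] deg_Qp[OF True, of z]
    unfolding Qp_def by simp
next
  case False
  then show ?thesis by (simp add: Qp_def)
qed

lemma coeff0_Tp: "1 \<le> j \<Longrightarrow> coeff (Tp a j) 0 = a ^ (j - 1)"
  unfolding Tp_def coeff_sum coeff_monom
  by (simp add: sum.delta)

lemma Qp_ne: "finite I \<Longrightarrow> Qp I z \<noteq> 0"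
  using lc_Qp[of I z] by auto

lemma same_B:
  assumes f: "finite I" and h: "Qp I y = Qp I x + [:c:]" and j: "1 \<le> j" "j \<le> card I"
  shows "Bp I y j = Bp I x j"
proof (rule ccontr)
  assume ne: "Bp I y j \<noteq> Bp I x j"
  have hx: "monom 1 j * pderiv (Qp I x) = Qp I x * Bp I x j + Ap I x j"
    using key_div[OF f] .
  have hy: "monom 1 j * pderiv (Qp I x) = (Qp I x + [:c:]) * Bp I y j + Ap I y j"
    using key_div[OF f, of j y] unfolding h by (simp add: pderiv_add pderiv_pCons)
  have eq: "Qp I x * (Bp I y j - Bp I x j) = Ap I x j - Ap I y j - smult c (Bp I y j)"
    using hx hy by (simp add: algebra_simps)
  have "degree (Qp I x * (Bp I y j - Bp I x j)) \<ge> card I"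
    using ne Qp_ne[OF f, of x] deg_Qp[OF f, of x] by (simp add: degree_mult_eq)
  moreover have "degree (Ap I x j - Ap I y j - smult c (Bp I y j)) < card I"
  proof -
    have "degree (Ap I x j) < card I" "degree (Ap I y j) < card I" "degree (smult c (Bp I y j)) < card I"
      using deg_Ap[OF f, of x j] deg_Ap[OF f, of y j] deg_Bp[OF f, of y j] degree_smult_le[of c "Bp I y j"] j
      by linarith+
    moreover have "degree (Ap I x j - Ap I y j) \<le> max (degree (Ap I x j)) (degree (Ap I y j))"
      by (rule degree_diff_le_max)
    moreover have "degree (Ap I x j - Ap I y j - smult c (Bp I y j)) \<le> max (degree (Ap I x j - Ap I y j)) (degree (smult c (Bp I y j)))"
      by (rule degree_diff_le_max)
    ultimately show ?thesis by linarith
  qed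
  ultimately show False using eq by simp
qed

lemma coeff0_Bp: "finite I \<Longrightarrow> coeff (Bp I z (Suc j)) 0 = (\<Sum>i\<in>I. z i ^ j)"
  unfolding Bp_def coeff_sum using coeff0_Tp by simp

lemma psum_eq:
  assumes f: "finite I" and h: "Qp I y = Qp I x + [:c:]" and j: "j < card I"
  shows "(\<Sum>i\<in>I. y i ^ j) = (\<Sum>i\<in>I. x i ^ j)"
  using same_B[OF f h, of "Suc j"] j coeff0_Bp[OF f, of y j] coeff0_Bp[OF f, of x j] by simp

lemma root_sum:
  assumes f: "finite I"
  shows "(\<Sum>l\<le>card I. coeff (Qp I z) l * (\<Sum>i\<in>I. z i ^ l)) = 0"
proof -
  have "poly (Qp I z) (z i) = 0" if "i \<in> I" for i
    unfolding Qp_def poly_prod using f that by (auto simp: prod_zero_iff)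
  hence "(\<Sum>i\<in>I. poly (Qp I z) (z i)) = 0" by simp
  thus ?thesis unfolding poly_altdef deg_Qp[OF f]
    by (simp add: sum_distrib_left sum.swap[of _ I] mult.commute)
qed

lemma psum_k:
  assumes f: "finite I" and h: "Qp I y = Qp I x + [:c:]" and K: "card I \<ge> 1"
  shows "(\<Sum>i\<in>I. y i ^ card I) = (\<Sum>i\<in>I. x i ^ card I) - real (card I) * c"
proof -
  let ?K = "card I"
  have cy: "coeff (Qp I y) l = coeff (Qp I x) l + (if l = 0 then c else 0)" for l
    unfolding h by (cases l) auto
  have ry: "(\<Sum>l\<le>?K. coeff (Qp I y) l * (\<Sum>i\<in>I. y i ^ l)) = 0" using root_sum[OF f] .
  have rx: "(\<Sum>l\<le>?K. coeff (Qp I x) l * (\<Sum>i\<in>I. x i ^ l)) = 0" using root_sum[OF f] .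
  have split: "(\<Sum>l\<le>?K. g l) = (\<Sum>l<?K. g l) + g ?K" for g :: "nat \<Rightarrow> real"
    by (simp add: lessThan_Suc_atMost[symmetric])
  have s1: "(\<Sum>l<?K. coeff (Qp I y) l * (\<Sum>i\<in>I. y i ^ l)) =
            (\<Sum>l<?K. coeff (Qp I x) l * (\<Sum>i\<in>I. x i ^ l)) + c * real ?K"
  proof -
    have "(\<Sum>l<?K. coeff (Qp I y) l * (\<Sum>i\<in>I. y i ^ l)) =
          (\<Sum>l<?K. coeff (Qp I x) l * (\<Sum>i\<in>I. x i ^ l) + (if l = 0 then c * real ?K else 0))"
      using psum_eq[OF f h] by (intro sum.cong) (auto simp: cy algebra_simps)
    also have "\<dots> = (\<Sum>l<?K. coeff (Qp I x) l * (\<Sum>i\<in>I. x i ^ l)) + c * real ?K"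
      using K by (simp add: sum.distrib)
    finally show ?thesis .
  qed
  show ?thesis using ry rx unfolding split s1 lc_Qp by (simp add: algebra_simps)
qed

lemma roots_Qp:
  assumes f: "finite I" and inj: "inj_on y I" and r: "\<forall>i\<in>I. poly (Qp I x) (y i) + c = 0"
    and K: "card I \<ge> 1"
  shows "Qp I y = Qp I x + [:c:]"
proof (rule poly_eqI_degree_lead_coeff[where A = "y ` I" and n = "card I"])
  show "coeff (Qp I y) (card I) = coeff (Qp I x + [:c:]) (card I)"
    using K lc_Qp[of I y] lc_Qp[of I x] by (cases "card I") auto
  show "card I \<le> card (y ` I)" using card_image[OF inj] by simp
  show "degree (Qp I y) \<le> card I" using deg_Qp[OF f] by simp
  show "degree (Qp I x + [:c:]) \<le> card I"
    using deg_Qp[OF f, of x] K by (intro degree_add_le) auto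
  fix z assume "z \<in> y ` I"
  then obtain i where i: "i \<in> I" "z = y i" by auto
  have "poly (Qp I y) (y i) = 0"
    unfolding Qp_def poly_prod using f i by (auto simp: prod_zero_iff)
  thus "poly (Qp I y) z = poly (Qp I x + [:c:]) z" using r i by simp
qed



lemma sorted_mono:
  assumes s: "\<forall>i\<in>{1..<k}. x (Suc i) \<le> (x i::real)" and "1 \<le> i" "i \<le> l" "l \<le> k"
  shows "x l \<le> x i"
  using assms(3,4)
proof (induction l rule: dec_induct)
  case base then show ?case by simp
next
  case (step n)
  hence "n \<in> {1..<k}" using assms(2) by auto
  hence "x (Suc n) \<le> x n" using s by auto
  thus ?case using step by simp
qed

lemma strict_mono_desc:
  assumes s: "\<forall>i\<in>{1..<k}. y (Suc i) < (y i::real)" and "1 \<le> i" "i < l" "l \<le> k"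
  shows "y l < y i"
  using assms(3,4)
proof (induction l rule: less_induct)
  case (less l)
  then obtain m where m: "l = Suc m" "i \<le> m" by (cases l) auto
  show ?case
  proof (cases "i = m")
    case True then show ?thesis using s m less assms(2) by auto
  next
    case False
    hence "y m < y i" using less m by auto
    moreover have "y l < y m" using s m less assms(2) by auto
    ultimately show ?thesis by simp
  qed
qed

lemma sign_prod:
  fixes x :: "nat \<Rightarrow> real"
  assumes "m \<le> k" "\<forall>i\<in>{1..m}. t < x i" "\<forall>i\<in>{Suc m..k}. x i < t"
  shows "(-1)^m * (\<Prod>i=1..k. (t - x i)) > 0"
proof -
  have u: "{1..k} = {1..m} \<union> {Suc m..k}" using assms(1) by auto
  have "(\<Prod>i=1..k. (t - x i)) = (\<Prod>i=1..m. (t - x i)) * (\<Prod>i=Suc m..k. (t - x i))"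
    unfolding u by (rule prod.union_disjoint) auto
  moreover have "(-1)^m * (\<Prod>i=1..m. (t - x i)) = (\<Prod>i=1..m. (x i - t))"
  proof -
    have "(\<Prod>i=1..m. (x i - t)) = (\<Prod>i=1..m. (-1) * (t - x i))" by simp
    also have "\<dots> = (-1)^m * (\<Prod>i=1..m. (t - x i))" by (simp only: prod.distrib prod_constant) simp
    finally show ?thesis by simp
  qed
  moreover have "(\<Prod>i=1..m. (x i - t)) > 0" using assms(2) by (intro prod_pos) auto
  moreover have "(\<Prod>i=Suc m..k. (t - x i)) > 0" using assms(3) by (intro prod_pos) auto
  ultimately show ?thesis by (metis mult.assoc mult_pos_pos)
qed

lemma finite_pos_lb:
  fixes V :: "real set"
  assumes "finite V" "\<forall>v\<in>V. v > 0"
  shows "\<exists>M>0. \<forall>v\<in>V. M \<le> v"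
proof -
  let ?M = "Min (insert 1 V)"
  have "?M > 0" using assms by (subst Min_gr_iff) auto
  moreover have "\<forall>v\<in>V. ?M \<le> v" using assms by auto
  ultimately show ?thesis by blast
qed

lemma perturb:
  fixes x :: "nat \<Rightarrow> real" and \<sigma> :: real
  assumes k: "1 \<le> k" and s: "\<forall>i\<in>{1..<k}. x (Suc i) \<le> x i"
    and sg: "\<sigma> = 1 \<or> \<sigma> = -1"
    and cond: "\<forall>l\<in>{1..<k}. x l = x (Suc l) \<longrightarrow> (-1)^l * \<sigma> > 0"
    and e: "e > 0"
  shows "\<exists>y c. \<sigma> * c > 0 \<and> (\<forall>i\<in>{1..<k}. y (Suc i) \<le> y i)
     \<and> (\<forall>j<k. (\<Sum>i=1..k. y i ^ j) = (\<Sum>i=1..k. x i ^ j))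
     \<and> (\<Sum>i=1..k. y i ^ k) = (\<Sum>i=1..k. x i ^ k) - real k * c \<and> distn k y x < e"
proof -
  obtain \<Delta> where \<Delta>: "\<Delta> > 0" "\<forall>l\<in>{1..<k}. x l \<noteq> x (Suc l) \<longrightarrow> \<Delta> \<le> x l - x (Suc l)"
  proof -
    have "\<exists>M>0. \<forall>v\<in>(\<lambda>l. x l - x (Suc l)) ` {l\<in>{1..<k}. x l \<noteq> x (Suc l)}. M \<le> v"
      using s by (intro finite_pos_lb) force+
    thus ?thesis using that by auto
  qed
  define \<delta> where "\<delta> = min (\<Delta>/2) (e / real k)"
  have \<delta>: "\<delta> > 0" "\<delta> \<le> \<Delta>/2" "\<delta> \<le> e / real k"
  proof -
    have "e / real k > 0" using e k by simp
    thus "\<delta> > 0" using \<Delta> unfolding \<delta>_def by simp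
    show "\<delta> \<le> \<Delta>/2" "\<delta> \<le> e / real k" unfolding \<delta>_def by (rule min.cobounded1, rule min.cobounded2)
  qed
  define P where "P t = (\<Prod>i=1..k. (t - x i))" for t
  define lo where "lo l = (if l < k \<and> x l = x (Suc l) then x l else x l - \<delta>)" for l
  define hi where "hi l = (if 1 < l \<and> x (l-1) = x l then x l else x l + \<delta>)" for l
  define S where "S = (\<lambda>l. x l - \<delta>) ` {1..k} \<union> (\<lambda>l. x l + \<delta>) ` {1..k}"
  obtain M where M: "M > 0" "\<forall>t\<in>S. P t \<noteq> 0 \<longrightarrow> M \<le> \<bar>P t\<bar>"
  proof -
    have "finite S" by (simp add: S_def)
    hence "\<exists>M>0. \<forall>v\<in>(\<lambda>t. \<bar>P t\<bar>) ` {t\<in>S. P t \<noteq> 0}. M \<le> v"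
      by (intro finite_pos_lb) auto
    thus ?thesis using that by auto
  qed
  define c where "c = \<sigma> * M / 2"
  have sc: "\<sigma> * c > 0" using sg M by (auto simp: c_def)
  have absc: "\<bar>(-1)^l * c\<bar> = M/2" for l :: nat
    using sg M by (auto simp: c_def abs_mult power_abs)
  have Px0: "P (x l) = 0" if "l \<in> {1..k}" for l
    unfolding P_def using that by (auto simp: prod_zero_iff)
  have lo_sign: "(-1)^l * (P (lo l) + c) > 0" if l: "l \<in> {1..k}" for l
  proof (cases "l < k \<and> x l = x (Suc l)")
    case True
    hence "(-1)^l * \<sigma> > 0" using cond l by auto
    moreover have "(-1)^l * c = ((-1)^l * \<sigma>) * (M/2)" unfolding c_def by simp
    moreover have "((-1)^l * \<sigma>) * (M/2) > 0" using mult_pos_pos[OF calculation(1), of "M/2"] M by linarith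
    ultimately have "(-1)^l * c > 0" by (simp only:)
    thus ?thesis using True Px0[OF l] by (simp add: lo_def)
  next
    case False
    let ?t = "x l - \<delta>"
    have lt: "lo l = ?t" unfolding lo_def by (rule if_not_P[OF False])
    have pos: "(-1)^l * P ?t > 0" unfolding P_def
    proof (rule sign_prod)
      show "l \<le> k" using l by simp
      show "\<forall>i\<in>{1..l}. ?t < x i"
        using sorted_mono[OF s] l \<delta> by force
      show "\<forall>i\<in>{Suc l..k}. x i < ?t"
      proof
        fix i assume i: "i \<in> {Suc l..k}"
        hence "l < k" "x l \<noteq> x (Suc l)" using False by auto
        hence "\<Delta> \<le> x l - x (Suc l)" using \<Delta> l by auto
        moreover have "x i \<le> x (Suc l)" using sorted_mono[OF s, of "Suc l" i] i by auto
        ultimately show "x i < ?t" using \<delta> \<Delta> by linarith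
      qed
    qed
    have "?t \<in> S" using l by (auto simp: S_def)
    moreover have "P ?t \<noteq> 0" using pos by auto
    ultimately have "M \<le> \<bar>P ?t\<bar>" using M by auto
    moreover have "\<bar>P ?t\<bar> = (-1)^l * P ?t"
    proof -
      have "\<bar>(-1)^l * P ?t\<bar> = \<bar>P ?t\<bar>" by (simp add: abs_mult power_abs)
      thus ?thesis using pos by simp
    qed
    moreover have "(-1)^l * c \<ge> - (M/2)" using absc[of l] by linarith
    ultimately show ?thesis unfolding lt using M by (simp add: algebra_simps)
  qed
  have hi_sign: "(-1)^l * (P (hi l) + c) < 0" if l: "l \<in> {1..k}" for l
  proof (cases "1 < l \<and> x (l-1) = x l")
    case True
    hence "(-1)^(l-1) * \<sigma> > 0" using cond l by (cases l) auto
    moreover have "(-1)^l = - ((-1)^(l-1) :: real)" using True by (cases l) auto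
    moreover have "(-1)^l * c = - (((-1)^(l-1) * \<sigma>) * (M/2))" unfolding c_def using calculation(2) by simp
    moreover have "((-1)^(l-1) * \<sigma>) * (M/2) > 0" using mult_pos_pos[OF calculation(1), of "M/2"] M by linarith
    ultimately have "(-1)^l * c < 0" by (simp only: neg_less_0_iff_less)
    thus ?thesis using True Px0[OF l] by (simp add: hi_def)
  next
    case False
    let ?t = "x l + \<delta>"
    have ht: "hi l = ?t" unfolding hi_def by (rule if_not_P[OF False])
    have pos: "(-1)^(l-1) * P ?t > 0" unfolding P_def
    proof (rule sign_prod)
      show "l - 1 \<le> k" using l by auto
      show "\<forall>i\<in>{Suc (l-1)..k}. x i < ?t"
        using sorted_mono[OF s, of l] l \<delta> by force
      show "\<forall>i\<in>{1..l-1}. ?t < x i"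
      proof
        fix i assume i: "i \<in> {1..l-1}"
        hence "1 < l" "x (l-1) \<noteq> x l" using False by auto
        moreover have sl: "Suc (l-1) = l" using \<open>1 < l\<close> by simp
        moreover have "l-1 \<in> {1..<k}" using \<open>1 < l\<close> l by auto
        ultimately have "\<Delta> \<le> x (l-1) - x l" using \<Delta>(2) by metis
        moreover have "x (l-1) \<le> x i" using sorted_mono[OF s, of i "l-1"] i l by auto
        ultimately show "?t < x i" using \<delta> \<Delta> by linarith
      qed
    qed
    have "?t \<in> S" using l by (auto simp: S_def)
    moreover have "P ?t \<noteq> 0" using pos by auto
    ultimately have "M \<le> \<bar>P ?t\<bar>" using M by auto
    moreover have "(-1)^l = - ((-1)^(l-1) :: real)" using l by (cases l) auto
    moreover have "\<bar>P ?t\<bar> = (-1)^(l-1) * P ?t"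
    proof -
      have "\<bar>(-1)^(l-1) * P ?t\<bar> = \<bar>P ?t\<bar>" by (simp add: abs_mult power_abs)
      thus ?thesis using pos by simp
    qed
    moreover have "(-1)^l * c \<le> (M/2)" using absc[of l] by linarith
    ultimately show ?thesis unfolding ht using M by (simp add: algebra_simps)
  qed
  have lo_le: "x l - \<delta> \<le> lo l" "lo l \<le> x l" for l using \<delta> by (auto simp: lo_def)
  have hi_le: "hi l \<le> x l + \<delta>" "x l \<le> hi l" for l using \<delta> by (auto simp: hi_def)
  have roots: "\<forall>l\<in>{1..k}. \<exists>r. lo l < r \<and> r < hi l \<and> P r + c = 0"
  proof
    fix l assume l: "l \<in> {1..k}"
    define g where "g t = (-1)^l * (P t + c)" for t
    have "continuous_on {lo l..hi l} g"
      unfolding g_def P_def by (intro continuous_intros)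
    moreover have "lo l \<le> hi l" using lo_le hi_le by (meson order_trans)
    ultimately obtain r where r: "lo l \<le> r" "r \<le> hi l" "g r = 0"
      using IVT2'[of g "hi l" 0 "lo l"] lo_sign[OF l] hi_sign[OF l] unfolding g_def by force
    have "r \<noteq> lo l" using r(3) lo_sign[OF l] unfolding g_def by auto
    moreover have "r \<noteq> hi l" using r(3) hi_sign[OF l] unfolding g_def by auto
    moreover have "P r + c = 0" using r(3) unfolding g_def by simp
    ultimately show "\<exists>r. lo l < r \<and> r < hi l \<and> P r + c = 0" using r by force
  qed
  then obtain y where y: "\<forall>l\<in>{1..k}. lo l < y l \<and> y l < hi l \<and> P (y l) + c = 0"
    by (metis bchoice)
  have ord: "hi (Suc l) \<le> lo l" if l: "l \<in> {1..<k}" for l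
  proof (cases "x l = x (Suc l)")
    case True then show ?thesis using l by (simp add: hi_def lo_def)
  next
    case False
    hence "\<Delta> \<le> x l - x (Suc l)" using \<Delta> l by auto
    moreover have "lo l = x l - \<delta>" using False by (simp add: lo_def)
    ultimately show ?thesis using hi_le(1)[of "Suc l"] \<delta> by linarith
  qed
  have strict: "\<forall>l\<in>{1..<k}. y (Suc l) < y l"
  proof
    fix l assume l: "l \<in> {1..<k}"
    have "y (Suc l) < hi (Suc l)" using y l by auto
    moreover have "lo l < y l" using y l by auto
    ultimately show "y (Suc l) < y l" using ord[OF l] by linarith
  qed
  have inj: "inj_on y {1..k}"
  proof (rule inj_onI)
    fix i l assume i: "i \<in> {1..k}" and l: "l \<in> {1..k}" and eq: "y i = y l"
    show "i = l"
    proof (rule ccontr)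
      assume "i \<noteq> l"
      hence "i < l \<or> l < i" by auto
      thus False using strict_mono_desc[OF strict] i l eq by fastforce
    qed
  qed
  have close: "\<bar>y l - x l\<bar> < \<delta>" if "l \<in> {1..k}" for l
    using y that lo_le[of l] hi_le[of l] by force
  have fin: "finite {1..k::nat}" by simp
  have ck: "card {1..k} = k" by simp
  have Q: "Qp {1..k} y = Qp {1..k} x + [:c:]"
  proof (rule roots_Qp[OF fin inj])
    show "\<forall>i\<in>{1..k}. poly (Qp {1..k} x) (y i) + c = 0"
      using y unfolding Qp_def poly_prod P_def by simp
    show "1 \<le> card {1..k}" using k by simp
  qed
  have pe: "\<forall>j<k. (\<Sum>i=1..k. y i ^ j) = (\<Sum>i=1..k. x i ^ j)"
    using psum_eq[OF fin Q] ck by simp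
  have pk: "(\<Sum>i=1..k. y i ^ k) = (\<Sum>i=1..k. x i ^ k) - real k * c"
    using psum_k[OF fin Q] ck k by simp
  have dist: "distn k y x < e"
  proof -
    have "(\<Sum>i=1..k. (y i - x i)^2) < (\<Sum>i=1..k. \<delta>^2)"
    proof (rule sum_strict_mono)
      fix i assume "i \<in> {1..k}"
      hence "\<bar>y i - x i\<bar> < \<delta>" by (rule close)
      hence "\<bar>y i - x i\<bar>^2 < \<delta>^2" by (intro power_strict_mono) auto
      thus "(y i - x i)^2 < \<delta>^2" by simp
    qed (use k in auto)
    also have "\<dots> = real k * \<delta>^2" by simp
    also have "\<dots> \<le> e^2"
    proof -
      have kd: "real k * \<delta> \<le> e" using \<delta>(3) k by (simp add: pos_le_divide_eq mult.commute)
      moreover have "1 * \<delta> \<le> real k * \<delta>" using k \<delta>(1) by (intro mult_right_mono) auto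
      ultimately have "\<delta> \<le> e" by simp
      hence "(real k * \<delta>) * \<delta> \<le> e * e" using kd \<delta>(1) e by (intro mult_mono) auto
      thus ?thesis by (simp add: power2_eq_square mult.assoc)
    qed
    finally have "sqrt (\<Sum>i=1..k. (y i - x i)^2) < sqrt (e^2)" by (rule real_sqrt_less_mono)
    thus ?thesis using e by (simp add: distn_def)
  qed
  show ?thesis
    using sc strict pe pk dist by (intro exI[of _ y] exI[of _ c]) (auto intro: less_imp_le)
qed


theorem mainTheorem13:
  fixes k :: nat and s :: "nat \<Rightarrow> real" and x :: "nat \<Rightarrow> real"
  assumes "k \<ge> 3"
  shows "(local_max_on k (Sk k k s) (\<lambda>y. \<Sum>i=1..k. y i ^ k) x \<longrightarrow>
            (\<exists>i::nat. 1 \<le> 2*i \<and> 2*i+1 \<le> k \<and> x (2*i) = x (2*i+1)))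
       \<and> (local_min_on k (Sk k k s) (\<lambda>y. \<Sum>i=1..k. y i ^ k) x \<longrightarrow>
            (\<exists>i::nat. 1 \<le> i \<and> 2*i \<le> k \<and> x (2*i-1) = x (2*i)))"
proof (intro conjI impI)
  have k: "1 \<le> k" using assms by simp
  assume lm: "local_max_on k (Sk k k s) (\<lambda>y. \<Sum>i=1..k. y i ^ k) x"
  show "\<exists>i::nat. 1 \<le> 2*i \<and> 2*i+1 \<le> k \<and> x (2*i) = x (2*i+1)"
  proof (rule ccontr)
    assume no: "\<not> ?thesis"
    from lm obtain e where xS: "x \<in> Sk k k s" and e: "e > 0"
      and mx: "\<forall>y\<in>Sk k k s. distn k y x < e \<longrightarrow> (\<Sum>i=1..k. y i ^ k) \<le> (\<Sum>i=1..k. x i ^ k)"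
      unfolding local_max_on_def by auto
    have s: "\<forall>i\<in>{1..<k}. x (Suc i) \<le> x i" and ps: "\<forall>j\<in>{1..k-1}. (\<Sum>i=1..k. x i ^ j) = s j"
      using xS unfolding Sk_def by auto
    have cond: "\<forall>l\<in>{1..<k}. x l = x (Suc l) \<longrightarrow> (-1)^l * (-1::real) > 0"
    proof (intro ballI impI)
      fix l assume l: "l \<in> {1..<k}" and eq: "x l = x (Suc l)"
      have "odd l"
      proof
        assume "even l"
        then obtain i where "l = 2*i" by auto
        thus False using no l eq by auto
      qed
      thus "(-1)^l * (-1::real) > 0" by simp
    qed
    obtain y c where yc: "(-1) * c > 0" "\<forall>i\<in>{1..<k}. y (Suc i) \<le> y i"
      "\<forall>j<k. (\<Sum>i=1..k. y i ^ j) = (\<Sum>i=1..k. x i ^ j)"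
      "(\<Sum>i=1..k. y i ^ k) = (\<Sum>i=1..k. x i ^ k) - real k * c" "distn k y x < e"
      using perturb[OF k s _ cond e] by auto
    have "y \<in> Sk k k s" unfolding Sk_def using yc(2,3) ps by auto
    hence "(\<Sum>i=1..k. y i ^ k) \<le> (\<Sum>i=1..k. x i ^ k)" using mx yc(5) by auto
    moreover have "real k * c < 0" using yc(1) k by (simp add: mult_pos_neg)
    ultimately show False using yc(4) by linarith
  qed
next
  have k: "1 \<le> k" using assms by simp
  assume lm: "local_min_on k (Sk k k s) (\<lambda>y. \<Sum>i=1..k. y i ^ k) x"
  show "\<exists>i::nat. 1 \<le> i \<and> 2*i \<le> k \<and> x (2*i-1) = x (2*i)"
  proof (rule ccontr)
    assume no: "\<not> ?thesis"
    from lm obtain e where xS: "x \<in> Sk k k s" and e: "e > 0"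
      and mn: "\<forall>y\<in>Sk k k s. distn k y x < e \<longrightarrow> (\<Sum>i=1..k. x i ^ k) \<le> (\<Sum>i=1..k. y i ^ k)"
      unfolding local_min_on_def by auto
    have s: "\<forall>i\<in>{1..<k}. x (Suc i) \<le> x i" and ps: "\<forall>j\<in>{1..k-1}. (\<Sum>i=1..k. x i ^ j) = s j"
      using xS unfolding Sk_def by auto
    have cond: "\<forall>l\<in>{1..<k}. x l = x (Suc l) \<longrightarrow> (-1)^l * (1::real) > 0"
    proof (intro ballI impI)
      fix l assume l: "l \<in> {1..<k}" and eq: "x l = x (Suc l)"
      have "even l"
      proof (rule ccontr)
        assume "odd l"
        then obtain i where i: "l = 2*i + 1" by (metis oddE)
        hence "1 \<le> Suc i \<and> 2 * Suc i \<le> k \<and> x (2 * Suc i - 1) = x (2 * Suc i)"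
          using l eq by auto
        thus False using no by blast
      qed
      thus "(-1)^l * (1::real) > 0" by simp
    qed
    obtain y c where yc: "1 * c > 0" "\<forall>i\<in>{1..<k}. y (Suc i) \<le> y i"
      "\<forall>j<k. (\<Sum>i=1..k. y i ^ j) = (\<Sum>i=1..k. x i ^ j)"
      "(\<Sum>i=1..k. y i ^ k) = (\<Sum>i=1..k. x i ^ k) - real k * c" "distn k y x < e"
      using perturb[OF k s _ cond e] by auto
    have "y \<in> Sk k k s" unfolding Sk_def using yc(2,3) ps by auto
    hence "(\<Sum>i=1..k. x i ^ k) \<le> (\<Sum>i=1..k. y i ^ k)" using mn yc(5) by auto
    moreover have "real k * c > 0" using yc(1) k by simp
    ultimately show False using yc(4) by linarith
  qed
qed

end
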